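(* Let $\hat x_1,\dots,\hat x_n\in\mathbb R^{k}$ with labels $y_1,\dots,y_n\in\{-1,+1\}$, and let $\rho_l,\rho_d>0$. Let the learner's strategy be $\theta_l=(\mu_w,\sigma_w)\in\Theta_l$, where $\Theta_l\subseteq\mathbb R^{k+1}\times\mathbb R^{k+1}_{\ge 0}$ is non-empty, compact and convex, and $w=(\tilde w,b)\in\mathbb R^{k}\times\mathbb R$ is distributed as $w=\mu_w+D(\sigma_w)z$ with $z\sim\mathcal N(0,I_{k+1})$. Let the data generator's strategy be $\theta_d=(\theta_d^{(1)},\dots,\theta_d^{(n)})\in\Theta_d=\prod_{i=1}^n\Theta_d^{(i)}$, $\theta_d^{(i)}=(\mu_{x_i},\sigma_{x_i})$, with each $\Theta_d^{(i)}\subseteq\mathbb R^k\times\mathbb R^k_{\ge0}$ non-empty, compact and convex, and $x_i=\mu_{x_i}+D(\sigma_{x_i})z_i$ with $z_i\sim\mathcal N(0,I_k)$, all of $z,z_1,\dots,z_n$ independent. Define $$c_l(w,X)=\frac{\rho_l}{2}\|\tilde w\|^2+\sum_{i=1}^n[1-y_i(\tilde w^\top x_i+b)]_+,\qquad c_d(w,X)=\frac{\rho_d}{2}\sum_{i=1}^n\|x_i-\hat x_i\|^2+\sum_{i=1}^n[1+y_i(\tilde w^\top x_i+b)]_+,$$ and $\bar c_l(\theta_l,\theta_d)=\mathbb E[c_l(w,X)]$, $\bar c_d(\theta_l,\theta_d)=\mathbb E[c_d(w,X)]$. Then $\bar c_l(\cdot,\theta_d)$ is convex on $\Theta_l$ for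 every $\theta_d\in\Theta_d$, $\bar c_d(\theta_l,\cdot)$ is convex on $\Theta_d$ for every $\theta_l\in\Theta_l$, and the game has at least one Nash equilibrium $(\theta_l^\star,\theta_d^\star)$, i.e. $\theta_l^\star\in\arg\min_{\theta_l\in\Theta_l}\bar c_l(\theta_l,\theta_d^\star)$ and $\theta_d^\star\in\arg\min_{\theta_d\in\Theta_d}\bar c_d(\theta_l^\star,\theta_d)$.
   Context: $[z]_+=\max(0,z)$. $D(v)$ denotes the diagonal matrix with the vector $v$ on its diagonal (so the Gaussians are axis-aligned with mean $\mu$ and standard deviations $\sigma$). $X=(x_1,\dots,x_n)$. *)

theory Defs
  imports "HOL-Probability.Probability"
begin

text \<open>Dimensions: the feature index type 'k (so R^k = real^'k) and the sample
index type 'n (n = CARD('n)).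
The noise is a family of independent standard Gaussians indexed by
('k option + 'n * 'k): Inl (Some j) is coordinate j of z for w~, Inl None the
coordinate of z for b, Inr (i, j) coordinate j of z_i.\<close>

definition std_normal_measure :: "real measure" where
  "std_normal_measure = density lborel std_normal_density"

definition noise_space :: "(('k::finite) option + ('n::finite) \<times> 'k \<Rightarrow> real) measure" where
  "noise_space = PiM UNIV (\<lambda>_. std_normal_measure)"

type_synonym 'k lstrat = "((real^'k) \<times> real) \<times> ((real^'k) \<times> real)"
type_synonym 'k dstrat = "(real^'k) \<times> (real^'k)"

definition w_of :: "'k::finite lstrat \<Rightarrow> ('k option + ('n::finite) \<times> 'k \<Rightarrow> real) \<Rightarrow> (real^'k) \<times> real" where
  "w_of \<theta>l \<omega> =
     ((\<chi> j. fst (fst \<theta>l) $ j + fst (snd \<theta>l) $ j * \<omega> (Inl (Some j))),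
      snd (fst \<theta>l) + snd (snd \<theta>l) * \<omega> (Inl None))"

definition X_of :: "('k::finite dstrat)^('n::finite) \<Rightarrow> ('k option + 'n \<times> 'k \<Rightarrow> real) \<Rightarrow> real^'k^'n" where
  "X_of \<theta>d \<omega> = (\<chi> i. \<chi> j. fst (\<theta>d $ i) $ j + snd (\<theta>d $ i) $ j * \<omega> (Inr (i, j)))"

definition hinge :: "real \<Rightarrow> real" where
  "hinge z = max 0 z"

definition c_l :: "real \<Rightarrow> ('n::finite \<Rightarrow> real) \<Rightarrow> (real^'k::finite) \<times> real \<Rightarrow> real^'k^'n \<Rightarrow> real" where
  "c_l \<rho>l y w X = \<rho>l / 2 * (norm (fst w))\<^sup>2
      + (\<Sum>i\<in>UNIV. hinge (1 - y i * (fst w \<bullet> X $ i + snd w)))"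

definition c_d :: "real \<Rightarrow> ('n::finite \<Rightarrow> real) \<Rightarrow> real^'k^'n \<Rightarrow> (real^'k::finite) \<times> real \<Rightarrow> real^'k^'n \<Rightarrow> real" where
  "c_d \<rho>d y xhat w X = \<rho>d / 2 * (\<Sum>i\<in>UNIV. (norm (X $ i - xhat $ i))\<^sup>2)
      + (\<Sum>i\<in>UNIV. hinge (1 + y i * (fst w \<bullet> X $ i + snd w)))"

definition cbar_l :: "real \<Rightarrow> ('n::finite \<Rightarrow> real) \<Rightarrow> 'k::finite lstrat \<Rightarrow> ('k dstrat)^'n \<Rightarrow> real" where
  "cbar_l \<rho>l y \<theta>l \<theta>d =
     integral\<^sup>L (noise_space :: ('k option + 'n \<times> 'k \<Rightarrow> real) measure)
       (\<lambda>\<omega>. c_l \<rho>l y (w_of \<theta>l \<omega>) (X_of \<theta>d \<omega>))"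

definition cbar_d :: "real \<Rightarrow> ('n::finite \<Rightarrow> real) \<Rightarrow> real^'k^'n \<Rightarrow> 'k::finite lstrat \<Rightarrow> ('k dstrat)^'n \<Rightarrow> real" where
  "cbar_d \<rho>d y xhat \<theta>l \<theta>d =
     integral\<^sup>L (noise_space :: ('k option + 'n \<times> 'k \<Rightarrow> real) measure)
       (\<lambda>\<omega>. c_d \<rho>d y xhat (w_of \<theta>l \<omega>) (X_of \<theta>d \<omega>))"

end

theory Submission
  imports Defs
begin


lemma prob_std: "prob_space std_normal_measure"
  unfolding std_normal_measure_def by (rule prob_space_normal_density) simp

lemma prob_noise: "prob_space (noise_space :: ('k::finite option + 'n::finite \<times> 'k \<Rightarrow> real) measure)"
  unfolding noise_space_def by (rule prob_space_PiM) (rule prob_std)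

lemma sets_std[measurable_cong]: "sets std_normal_measure = sets borel"
  unfolding std_normal_measure_def by simp

lemma integrable_std_pow: "integrable std_normal_measure (\<lambda>x. x ^ k)"
  unfolding std_normal_measure_def
  apply (subst integrable_density)
  using integrable_std_normal_moment[of k] by (auto simp: normal_density_nonneg)

lemma integrable_comp_pow:
  "integrable (noise_space :: ('k::finite option + 'n::finite \<times> 'k \<Rightarrow> real) measure) (\<lambda>\<omega>. (\<omega> i) ^ k)"
proof -
  have "distr (noise_space :: ('k::finite option + 'n::finite \<times> 'k \<Rightarrow> real) measure) std_normal_measure (\<lambda>\<omega>. \<omega> i) = std_normal_measure"
    unfolding noise_space_def by (rule distr_PiM_component) (auto intro: prob_std)
  moreover have "integrable (distr (noise_space :: ('k::finite option + 'n::finite \<times> 'k \<Rightarrow> real) measure) std_normal_measure (\<lambda>\<omega>. \<omega> i)) (\<lambda>x. x ^ k)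
     \<longleftrightarrow> integrable (noise_space :: ('k::finite option + 'n::finite \<times> 'k \<Rightarrow> real) measure) (\<lambda>\<omega>. (\<omega> i) ^ k)"
    by (rule integrable_distr_eq) (auto simp: noise_space_def)
  ultimately show ?thesis using integrable_std_pow by simp
qed



lemma cont_integral:
  fixes G :: "'p::euclidean_space \<Rightarrow> 'w \<Rightarrow> real"
  assumes meas: "\<And>\<theta>. G \<theta> \<in> borel_measurable M"
    and cont: "\<And>\<omega>. continuous_on UNIV (\<lambda>\<theta>. G \<theta> \<omega>)"
    and bound: "\<And>R. \<exists>Q. integrable M Q \<and> (\<forall>\<theta> \<omega>. norm \<theta> \<le> R \<longrightarrow> \<bar>G \<theta> \<omega>\<bar> \<le> Q \<omega>)"
  shows "continuous_on S (\<lambda>\<theta>. \<integral>\<omega>. G \<theta> \<omega> \<partial>M)"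
proof (rule continuous_on_sequentiallyI)
  fix u :: "nat \<Rightarrow> 'p" and a assume lim: "u \<longlonglongrightarrow> a"
  then have "Bseq u" by (rule convergent_imp_Bseq[OF convergentI])
  then obtain K where K: "\<And>n. norm (u n) \<le> K" by (auto simp: Bseq_def)
  obtain Q where Q: "integrable M Q" "\<And>\<theta> \<omega>. norm \<theta> \<le> max K (norm a) \<Longrightarrow> \<bar>G \<theta> \<omega>\<bar> \<le> Q \<omega>"
    using bound[of "max K (norm a)"] by blast
  show "(\<lambda>n. \<integral>\<omega>. G (u n) \<omega> \<partial>M) \<longlonglongrightarrow> \<integral>\<omega>. G a \<omega> \<partial>M"
  proof (rule integral_dominated_convergence[where w=Q])
    show "AE \<omega> in M. (\<lambda>n. G (u n) \<omega>) \<longlonglongrightarrow> G a \<omega>"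
      using continuous_on_tendsto_compose[OF cont lim] by simp
    show "AE \<omega> in M. norm (G (u n) \<omega>) \<le> Q \<omega>" for n
      using Q(2)[of "u n"] K[of n] by auto
  qed (use meas Q in auto)
qed

lemma integrable_of_bound:
  fixes G :: "'p::real_normed_vector \<Rightarrow> 'w \<Rightarrow> real"
  assumes meas: "G \<theta> \<in> borel_measurable M"
    and bound: "\<And>R. \<exists>Q. integrable M Q \<and> (\<forall>\<theta> \<omega>. norm \<theta> \<le> R \<longrightarrow> \<bar>G \<theta> \<omega>\<bar> \<le> Q \<omega>)"
  shows "integrable M (G \<theta>)"
proof -
  obtain Q where Q: "integrable M Q" "\<And>\<theta>' \<omega>. norm \<theta>' \<le> norm \<theta> \<Longrightarrow> \<bar>G \<theta>' \<omega>\<bar> \<le> Q \<omega>"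
    using bound[of "norm \<theta>"] by blast
  show ?thesis
    by (rule Bochner_Integration.integrable_bound[OF Q(1) meas]) (use Q(2)[of \<theta>] in \<open>auto intro!: AE_I2 order_trans[OF _ abs_ge_self]\<close>)
qed

definition NN :: "('i::finite \<Rightarrow> real) \<Rightarrow> real" where "NN \<omega> = 1 + (\<Sum>i\<in>UNIV. \<bar>\<omega> i\<bar>)"

lemma NN_ge1: "NN \<omega> \<ge> 1" unfolding NN_def by (simp add: sum_nonneg)

definition lin :: "('p::real_normed_vector \<Rightarrow> ('i::finite \<Rightarrow> real) \<Rightarrow> real) \<Rightarrow> bool" where
  "lin F \<longleftrightarrow> (\<forall>R. \<exists>M\<ge>0. \<forall>\<theta> \<omega>. norm \<theta> \<le> R \<longrightarrow> \<bar>F \<theta> \<omega>\<bar> \<le> M * NN \<omega>)"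

definition quad :: "('p::real_normed_vector \<Rightarrow> ('i::finite \<Rightarrow> real) \<Rightarrow> real) \<Rightarrow> bool" where
  "quad F \<longleftrightarrow> (\<forall>R. \<exists>M\<ge>0. \<forall>\<theta> \<omega>. norm \<theta> \<le> R \<longrightarrow> \<bar>F \<theta> \<omega>\<bar> \<le> M * (NN \<omega>)\<^sup>2)"

lemma cont_bounded_ball:
  fixes p :: "'p::euclidean_space \<Rightarrow> real"
  assumes "continuous_on UNIV p"
  shows "\<exists>M\<ge>0. \<forall>\<theta>. norm \<theta> \<le> R \<longrightarrow> \<bar>p \<theta>\<bar> \<le> M"
proof -
  have "compact (p ` cball 0 R)"
    by (rule compact_continuous_image) (auto intro: continuous_on_subset[OF assms])
  then obtain M where "\<forall>x\<in>p ` cball 0 R. norm x \<le> M" using compact_imp_bounded bounded_iff by metis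
  then show ?thesis by (intro exI[of _ "max M 0"]) (auto simp: mem_cball_0 le_max_iff_disj)
qed

lemma lin_param:
  fixes p :: "'p::euclidean_space \<Rightarrow> real"
  assumes "continuous_on UNIV p"
  shows "lin (\<lambda>\<theta> (\<omega>::'i::finite \<Rightarrow> real). p \<theta>)"
  unfolding lin_def
proof
  fix R
  obtain M where M: "M \<ge> 0" "\<And>\<theta>. norm \<theta> \<le> R \<Longrightarrow> \<bar>p \<theta>\<bar> \<le> M" using cont_bounded_ball[OF assms] by blast
  have "\<bar>p \<theta>\<bar> \<le> M * NN \<omega>" if "norm \<theta> \<le> R" for \<theta> and \<omega> :: "'i \<Rightarrow> real"
    using M(2)[OF that] mult_left_mono[OF NN_ge1[of \<omega>] M(1)] by simp
  then show "\<exists>M\<ge>0. \<forall>\<theta> (\<omega>::'i \<Rightarrow> real). norm \<theta> \<le> R \<longrightarrow> \<bar>p \<theta>\<bar> \<le> M * NN \<omega>" using M(1) by blast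
qed

lemma lin_comp: "lin (\<lambda>\<theta> (\<omega>::'i::finite \<Rightarrow> real). \<omega> i)"
  unfolding lin_def
proof (intro allI exI[of _ 1] conjI impI allI)
  fix \<omega> :: "'i \<Rightarrow> real"
  have "\<bar>\<omega> i\<bar> \<le> (\<Sum>i\<in>UNIV. \<bar>\<omega> i\<bar>)" by (rule member_le_sum) auto
  then show "\<bar>\<omega> i\<bar> \<le> 1 * NN \<omega>" unfolding NN_def by simp
qed simp

lemma lin_add: "lin F \<Longrightarrow> lin G \<Longrightarrow> lin (\<lambda>\<theta> \<omega>. F \<theta> \<omega> + G \<theta> \<omega>)"
  unfolding lin_def
proof (intro allI)
  fix R assume F: "\<forall>R. \<exists>M\<ge>0. \<forall>\<theta> \<omega>. norm \<theta> \<le> R \<longrightarrow> \<bar>F \<theta> \<omega>\<bar> \<le> M * NN \<omega>"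
    and G: "\<forall>R. \<exists>M\<ge>0. \<forall>\<theta> \<omega>. norm \<theta> \<le> R \<longrightarrow> \<bar>G \<theta> \<omega>\<bar> \<le> M * NN \<omega>"
  obtain M1 where M1: "M1 \<ge> 0" "\<forall>\<theta> \<omega>. norm \<theta> \<le> R \<longrightarrow> \<bar>F \<theta> \<omega>\<bar> \<le> M1 * NN \<omega>" using F by blast
  obtain M2 where M2: "M2 \<ge> 0" "\<forall>\<theta> \<omega>. norm \<theta> \<le> R \<longrightarrow> \<bar>G \<theta> \<omega>\<bar> \<le> M2 * NN \<omega>" using G by blast
  show "\<exists>M\<ge>0. \<forall>\<theta> \<omega>. norm \<theta> \<le> R \<longrightarrow> \<bar>F \<theta> \<omega> + G \<theta> \<omega>\<bar> \<le> M * NN \<omega>"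
  proof -
    have "\<bar>F \<theta> \<omega> + G \<theta> \<omega>\<bar> \<le> (M1 + M2) * NN \<omega>" if "norm \<theta> \<le> R" for \<theta> \<omega>
    proof -
      have "\<bar>F \<theta> \<omega>\<bar> + \<bar>G \<theta> \<omega>\<bar> \<le> M1 * NN \<omega> + M2 * NN \<omega>" using M1 M2 that by (intro add_mono) auto
      then show ?thesis by (simp add: distrib_right)
    qed
    then show ?thesis using M1(1) M2(1) by (intro exI[of _ "M1 + M2"]) auto
  qed
qed

lemma lin_mult_param:
  fixes p :: "'p::euclidean_space \<Rightarrow> real"
  assumes "continuous_on UNIV p" "lin F"
  shows "lin (\<lambda>\<theta> \<omega>. p \<theta> * F \<theta> \<omega>)"
  unfolding lin_def
proof
  fix R
  obtain M where M: "M \<ge> 0" "\<And>\<theta>. norm \<theta> \<le> R \<Longrightarrow> \<bar>p \<theta>\<bar> \<le> M" using cont_bounded_ball[OF assms(1)] by blast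
  obtain M1 where M1: "M1 \<ge> 0" "\<forall>\<theta> \<omega>. norm \<theta> \<le> R \<longrightarrow> \<bar>F \<theta> \<omega>\<bar> \<le> M1 * NN \<omega>" using assms(2) unfolding lin_def by blast
  have "\<bar>p \<theta> * F \<theta> \<omega>\<bar> \<le> (M * M1) * NN \<omega>" if "norm \<theta> \<le> R" for \<theta> \<omega>
    using mult_mono[OF M(2)[OF that] M1(2)[rule_format, OF that]] M(1) by (simp add: abs_mult mult.assoc)
  then show "\<exists>M\<ge>0. \<forall>\<theta> \<omega>. norm \<theta> \<le> R \<longrightarrow> \<bar>p \<theta> * F \<theta> \<omega>\<bar> \<le> M * NN \<omega>" using M(1) M1(1) by (intro exI[of _ "M*M1"]) auto
qed

lemma quad_mult: "lin F \<Longrightarrow> lin G \<Longrightarrow> quad (\<lambda>\<theta> \<omega>. F \<theta> \<omega> * G \<theta> \<omega>)"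
  unfolding lin_def quad_def
proof (intro allI)
  fix R assume F: "\<forall>R. \<exists>M\<ge>0. \<forall>\<theta> \<omega>. norm \<theta> \<le> R \<longrightarrow> \<bar>F \<theta> \<omega>\<bar> \<le> M * NN \<omega>"
    and G: "\<forall>R. \<exists>M\<ge>0. \<forall>\<theta> \<omega>. norm \<theta> \<le> R \<longrightarrow> \<bar>G \<theta> \<omega>\<bar> \<le> M * NN \<omega>"
  obtain M1 where M1: "M1 \<ge> 0" "\<forall>\<theta> \<omega>. norm \<theta> \<le> R \<longrightarrow> \<bar>F \<theta> \<omega>\<bar> \<le> M1 * NN \<omega>" using F by blast
  obtain M2 where M2: "M2 \<ge> 0" "\<forall>\<theta> \<omega>. norm \<theta> \<le> R \<longrightarrow> \<bar>G \<theta> \<omega>\<bar> \<le> M2 * NN \<omega>" using G by blast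
  have "\<bar>F \<theta> \<omega> * G \<theta> \<omega>\<bar> \<le> (M1 * M2) * (NN \<omega>)\<^sup>2" if "norm \<theta> \<le> R" for \<theta> \<omega>
    using mult_mono[OF M1(2)[rule_format, OF that] M2(2)[rule_format, OF that]] M1(1) NN_ge1[of \<omega>]
    by (simp add: abs_mult power2_eq_square mult_ac)
  then show "\<exists>M\<ge>0. \<forall>\<theta> \<omega>. norm \<theta> \<le> R \<longrightarrow> \<bar>F \<theta> \<omega> * G \<theta> \<omega>\<bar> \<le> M * (NN \<omega>)\<^sup>2"
    using M1(1) M2(1) by (intro exI[of _ "M1*M2"]) auto
qed

lemma quad_of_lin: "lin F \<Longrightarrow> quad F"
  unfolding lin_def quad_def
proof (intro allI)
  fix R assume F: "\<forall>R. \<exists>M\<ge>0. \<forall>\<theta> \<omega>. norm \<theta> \<le> R \<longrightarrow> \<bar>F \<theta> \<omega>\<bar> \<le> M * NN \<omega>"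
  obtain M1 where M1: "M1 \<ge> 0" "\<forall>\<theta> \<omega>. norm \<theta> \<le> R \<longrightarrow> \<bar>F \<theta> \<omega>\<bar> \<le> M1 * NN \<omega>" using F by blast
  have "M1 * NN \<omega> \<le> M1 * (NN \<omega>)\<^sup>2" for \<omega>
    using NN_ge1[of \<omega>] M1(1) by (intro mult_left_mono) (auto simp: power2_eq_square)
  then show "\<exists>M\<ge>0. \<forall>\<theta> \<omega>. norm \<theta> \<le> R \<longrightarrow> \<bar>F \<theta> \<omega>\<bar> \<le> M * (NN \<omega>)\<^sup>2"
    using M1 by (intro exI[of _ M1]) (auto intro: order_trans)
qed

lemma quad_add: "quad F \<Longrightarrow> quad G \<Longrightarrow> quad (\<lambda>\<theta> \<omega>. F \<theta> \<omega> + G \<theta> \<omega>)"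
  unfolding quad_def
proof (intro allI)
  fix R assume F: "\<forall>R. \<exists>M\<ge>0. \<forall>\<theta> \<omega>. norm \<theta> \<le> R \<longrightarrow> \<bar>F \<theta> \<omega>\<bar> \<le> M * (NN \<omega>)\<^sup>2"
    and G: "\<forall>R. \<exists>M\<ge>0. \<forall>\<theta> \<omega>. norm \<theta> \<le> R \<longrightarrow> \<bar>G \<theta> \<omega>\<bar> \<le> M * (NN \<omega>)\<^sup>2"
  obtain M1 where M1: "M1 \<ge> 0" "\<forall>\<theta> \<omega>. norm \<theta> \<le> R \<longrightarrow> \<bar>F \<theta> \<omega>\<bar> \<le> M1 * (NN \<omega>)\<^sup>2" using F by blast
  obtain M2 where M2: "M2 \<ge> 0" "\<forall>\<theta> \<omega>. norm \<theta> \<le> R \<longrightarrow> \<bar>G \<theta> \<omega>\<bar> \<le> M2 * (NN \<omega>)\<^sup>2" using G by blast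
  show "\<exists>M\<ge>0. \<forall>\<theta> \<omega>. norm \<theta> \<le> R \<longrightarrow> \<bar>F \<theta> \<omega> + G \<theta> \<omega>\<bar> \<le> M * (NN \<omega>)\<^sup>2"
  proof -
    have "\<bar>F \<theta> \<omega> + G \<theta> \<omega>\<bar> \<le> (M1 + M2) * (NN \<omega>)\<^sup>2" if "norm \<theta> \<le> R" for \<theta> \<omega>
    proof -
      have "\<bar>F \<theta> \<omega>\<bar> + \<bar>G \<theta> \<omega>\<bar> \<le> M1 * (NN \<omega>)\<^sup>2 + M2 * (NN \<omega>)\<^sup>2" using M1 M2 that by (intro add_mono) auto
      then show ?thesis by (simp add: distrib_right)
    qed
    then show ?thesis using M1(1) M2(1) by (intro exI[of _ "M1 + M2"]) auto
  qed
qed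

lemma quad_bound: "quad F \<Longrightarrow> (\<And>\<theta> \<omega>. \<bar>G \<theta> \<omega>\<bar> \<le> \<bar>F \<theta> \<omega>\<bar>) \<Longrightarrow> quad G"
  unfolding quad_def by (meson order_trans)

lemma quad_max0: "quad F \<Longrightarrow> quad (\<lambda>\<theta> \<omega>. max 0 (F \<theta> \<omega>))"
  by (erule quad_bound) auto

lemma quad_const_mult: "quad F \<Longrightarrow> quad (\<lambda>\<theta> \<omega>. c * F \<theta> \<omega>)"
  unfolding quad_def
proof (intro allI)
  fix R assume F: "\<forall>R. \<exists>M\<ge>0. \<forall>\<theta> \<omega>. norm \<theta> \<le> R \<longrightarrow> \<bar>F \<theta> \<omega>\<bar> \<le> M * (NN \<omega>)\<^sup>2"
  obtain M1 where M1: "M1 \<ge> 0" "\<forall>\<theta> \<omega>. norm \<theta> \<le> R \<longrightarrow> \<bar>F \<theta> \<omega>\<bar> \<le> M1 * (NN \<omega>)\<^sup>2" using F by blast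
  have "\<bar>c * F \<theta> \<omega>\<bar> \<le> (\<bar>c\<bar> * M1) * (NN \<omega>)\<^sup>2" if "norm \<theta> \<le> R" for \<theta> \<omega>
    using mult_left_mono[OF M1(2)[rule_format, OF that], of "\<bar>c\<bar>"] by (simp add: abs_mult mult.assoc)
  then show "\<exists>M\<ge>0. \<forall>\<theta> \<omega>. norm \<theta> \<le> R \<longrightarrow> \<bar>c * F \<theta> \<omega>\<bar> \<le> M * (NN \<omega>)\<^sup>2"
    using M1(1) by (intro exI[of _ "\<bar>c\<bar> * M1"]) auto
qed

lemma quad_sum: "finite S \<Longrightarrow> (\<And>i. i \<in> S \<Longrightarrow> quad (F i)) \<Longrightarrow> quad (\<lambda>\<theta> \<omega>. \<Sum>i\<in>S. F i \<theta> \<omega>)"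
proof (induction S rule: finite_induct)
  case empty
  then show ?case unfolding quad_def by auto
next
  case (insert x S)
  then show ?case by (simp add: quad_add)
qed

lemma quad_const: "quad (\<lambda>(\<theta>::'p::euclidean_space) (\<omega>::'i::finite \<Rightarrow> real). c)"
  by (rule quad_of_lin, rule lin_param) simp

lemma quad_neg: "quad F \<Longrightarrow> quad (\<lambda>\<theta> \<omega>. - F \<theta> \<omega>)"
  by (erule quad_bound) auto



abbreviation NS where "NS \<equiv> (noise_space :: ('k::finite option + 'n::finite \<times> 'k \<Rightarrow> real) measure)"

lemma meas_comp[measurable]: "(\<lambda>\<omega>. \<omega> i) \<in> borel_measurable (noise_space :: ('k::finite option + 'n::finite \<times> 'k \<Rightarrow> real) measure)"
  unfolding noise_space_def measurable_cong_sets[OF refl sets_std[symmetric]]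
  by (rule measurable_component_singleton) simp

lemma integrable_NN2: "integrable (noise_space :: ('k::finite option + 'n::finite \<times> 'k \<Rightarrow> real) measure) (\<lambda>\<omega>. (NN \<omega>)\<^sup>2)"
proof -
  let ?M = "noise_space :: ('k::finite option + 'n::finite \<times> 'k \<Rightarrow> real) measure"
  interpret prob_space ?M by (rule prob_noise)
  have si: "integrable ?M (\<lambda>\<omega>. \<Sum>i\<in>UNIV. (\<omega> i)\<^sup>2)"
    by (intro Bochner_Integration.integrable_sum integrable_comp_pow)
  have int: "integrable ?M (\<lambda>\<omega>. 2 + 2 * (real CARD('k option + 'n \<times> 'k) * (\<Sum>i\<in>UNIV. (\<omega> i)\<^sup>2)))"
    by (intro Bochner_Integration.integrable_add integrable_mult_right si integrable_const)
  show ?thesis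
  proof (rule Bochner_Integration.integrable_bound[OF int])
    show "(\<lambda>\<omega>. (NN \<omega>)\<^sup>2) \<in> borel_measurable ?M" unfolding NN_def by measurable
    show "AE \<omega> in ?M. norm ((NN \<omega>)\<^sup>2) \<le> norm (2 + 2 * (real CARD('k option + 'n \<times> 'k) * (\<Sum>i\<in>UNIV. (\<omega> i)\<^sup>2)))"
    proof (rule AE_I2)
      fix \<omega> :: "'k option + 'n \<times> 'k \<Rightarrow> real"
      have cs: "(\<Sum>i\<in>UNIV. \<bar>\<omega> i\<bar>)\<^sup>2 \<le> (\<Sum>i\<in>UNIV. \<bar>\<omega> i\<bar>\<^sup>2) * real CARD('k option + 'n \<times> 'k)"
        by (rule sum_squared_le_sum_of_squares)
      have "(NN \<omega>)\<^sup>2 \<le> 2 + 2 * (\<Sum>i\<in>UNIV. \<bar>\<omega> i\<bar>)\<^sup>2"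
        unfolding NN_def using zero_le_power2[of "1 - (\<Sum>i\<in>UNIV. \<bar>\<omega> i\<bar>)"]
        by (simp add: power2_eq_square algebra_simps)
      also have "\<dots> \<le> 2 + 2 * (real CARD('k option + 'n \<times> 'k) * (\<Sum>i\<in>UNIV. (\<omega> i)\<^sup>2))"
        using cs by (simp add: mult.commute)
      finally show "norm ((NN \<omega>)\<^sup>2) \<le> norm (2 + 2 * (real CARD('k option + 'n \<times> 'k) * (\<Sum>i\<in>UNIV. (\<omega> i)\<^sup>2)))"
        by (simp add: sum_nonneg)
    qed
  qed
qed

lemma quad_integrable_bound:
  assumes "quad (F :: 'p::real_normed_vector \<Rightarrow> ('k::finite option + 'n::finite \<times> 'k \<Rightarrow> real) \<Rightarrow> real)"
  shows "\<exists>Q. integrable (noise_space :: ('k option + 'n \<times> 'k \<Rightarrow> real) measure) Q \<and> (\<forall>\<theta> \<omega>. norm \<theta> \<le> R \<longrightarrow> \<bar>F \<theta> \<omega>\<bar> \<le> Q \<omega>)"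
proof -
  obtain M where "\<forall>\<theta> \<omega>. norm \<theta> \<le> R \<longrightarrow> \<bar>F \<theta> \<omega>\<bar> \<le> M * (NN \<omega>)\<^sup>2" using assms unfolding quad_def by blast
  then show ?thesis by (intro exI[of _ "\<lambda>\<omega>. M * (NN \<omega>)\<^sup>2"]) (auto intro: integrable_NN2)
qed



lemma norm_mid_strict:
  fixes a b :: "'a::real_inner"
  assumes "a \<noteq> b"
  shows "(norm ((1/2) *\<^sub>R a + (1/2) *\<^sub>R b))\<^sup>2 < (1/2) * (norm a)\<^sup>2 + (1/2) * (norm b)\<^sup>2"
proof -
  have "0 < (norm (a - b))\<^sup>2" using assms by simp
  moreover have "(norm ((1/2) *\<^sub>R a + (1/2) *\<^sub>R b))\<^sup>2 = (1/2) * (norm a)\<^sup>2 + (1/2) * (norm b)\<^sup>2 - (1/4) * (norm (a - b))\<^sup>2"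
    by (simp add: power2_norm_eq_inner inner_add_left inner_add_right inner_diff_left inner_diff_right inner_commute algebra_simps)
  ultimately show ?thesis by simp
qed

lemma best_response:
  fixes h :: "'b::euclidean_space \<Rightarrow> 'a::euclidean_space \<Rightarrow> real"
  assumes A: "compact A" "convex A" "A \<noteq> {}"
    and B: "compact B"
    and cont: "continuous_on (B \<times> A) (\<lambda>p. h (fst p) (snd p))"
    and conv: "\<And>b. b \<in> B \<Longrightarrow> convex_on A (h b)"
    and e: "e > 0"
  shows "\<exists>r. (\<forall>b\<in>B. r b \<in> A \<and> (\<forall>a\<in>A. h b (r b) + e * (norm (r b))\<^sup>2 \<le> h b a + e * (norm a)\<^sup>2))
           \<and> continuous_on B r"
proof -
  define H where "H b a = h b a + e * (norm a)\<^sup>2" for b a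
  have contH: "continuous_on (B \<times> A) (\<lambda>p. H (fst p) (snd p))"
    unfolding H_def by (intro continuous_intros cont)
  have contH2: "continuous_on (B \<times> A) (\<lambda>p. H (fst p) a')" if "a' \<in> A" for a'
  proof -
    have "continuous_on (B \<times> A) ((\<lambda>p. H (fst p) (snd p)) \<circ> (\<lambda>p. (fst p, a')))"
      by (rule continuous_on_compose) (auto intro!: continuous_intros continuous_on_subset[OF contH] simp: that)
    then show ?thesis by (simp add: o_def)
  qed
  have ex: "\<exists>a\<in>A. \<forall>a'\<in>A. H b a \<le> H b a'" if b: "b \<in> B" for b
  proof -
    have "continuous_on A ((\<lambda>p. H (fst p) (snd p)) \<circ> (\<lambda>a. (b, a)))"
      by (rule continuous_on_compose) (auto intro!: continuous_intros continuous_on_subset[OF contH] simp: b)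
    then have "continuous_on A (H b)" by (simp add: o_def)
    then show ?thesis using continuous_attains_inf[OF A(1) A(3)] by blast
  qed
  have uniq: "a1 = a2" if b: "b \<in> B" and a1: "a1 \<in> A" "\<forall>a'\<in>A. H b a1 \<le> H b a'"
    and a2: "a2 \<in> A" "\<forall>a'\<in>A. H b a2 \<le> H b a'" for b a1 a2
  proof (rule ccontr)
    assume ne: "a1 \<noteq> a2"
    define m where "m = (1/2) *\<^sub>R a1 + (1/2) *\<^sub>R a2"
    have mA: "m \<in> A" unfolding m_def using A(2) a1 a2 by (intro convexD) auto
    have "h b ((1 - 1/2) *\<^sub>R a1 + (1/2) *\<^sub>R a2) \<le> (1 - 1/2) * h b a1 + (1/2) * h b a2"
      by (rule convex_onD[OF conv[OF b]]) (use a1 a2 in auto)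
    then have "h b m \<le> (1/2) * h b a1 + (1/2) * h b a2"
      unfolding m_def by simp
    moreover have "(norm m)\<^sup>2 < (1/2) * (norm a1)\<^sup>2 + (1/2) * (norm a2)\<^sup>2"
      unfolding m_def by (rule norm_mid_strict[OF ne])
    then have "e * (norm m)\<^sup>2 < e * ((1/2) * (norm a1)\<^sup>2 + (1/2) * (norm a2)\<^sup>2)"
      using e by (rule mult_strict_left_mono)
    ultimately have "H b m < (1/2) * H b a1 + (1/2) * H b a2"
      unfolding H_def by (simp add: algebra_simps)
    moreover have "H b a1 \<le> H b m" "H b a1 \<le> H b a2" "H b a2 \<le> H b a1"
      using a1 a2 mA by auto
    ultimately show False by linarith
  qed
  define r where "r b = (SOME a. a \<in> A \<and> (\<forall>a'\<in>A. H b a \<le> H b a'))" for b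
  have r: "r b \<in> A \<and> (\<forall>a'\<in>A. H b (r b) \<le> H b a')" if "b \<in> B" for b
    unfolding r_def using ex[OF that] by (rule someI_ex[where P="\<lambda>a. a \<in> A \<and> (\<forall>a'\<in>A. H b a \<le> H b a')", OF bexE]) blast+
  have graph: "(\<lambda>x. Pair x (r x)) ` B = (B \<times> A) \<inter> (\<Inter>a'\<in>A. {p \<in> B \<times> A. H (fst p) (snd p) \<le> H (fst p) a'})"
  proof (intro equalityI subsetI)
    fix p assume "p \<in> (\<lambda>x. Pair x (r x)) ` B"
    then show "p \<in> (B \<times> A) \<inter> (\<Inter>a'\<in>A. {p \<in> B \<times> A. H (fst p) (snd p) \<le> H (fst p) a'})"
      using r by auto
  next
    fix p assume p: "p \<in> (B \<times> A) \<inter> (\<Inter>a'\<in>A. {p \<in> B \<times> A. H (fst p) (snd p) \<le> H (fst p) a'})"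
    then have "snd p = r (fst p)"
      using uniq[of "fst p" "snd p" "r (fst p)"] r[of "fst p"] by auto
    then show "p \<in> (\<lambda>x. Pair x (r x)) ` B" using p by (auto intro!: image_eqI[of _ _ "fst p"])
  qed
  have clBA: "closed (B \<times> A)" using A B by (simp add: compact_imp_closed compact_Times)
  have clg: "closed ((\<lambda>x. Pair x (r x)) ` B)"
    unfolding graph
    by (intro closed_Int clBA closed_INT ballI continuous_on_closed_Collect_le contH contH2) auto
  have "continuous_on B r"
    by (rule continuous_from_closed_graph[OF A(1) _ clg]) (use r in auto)
  then show ?thesis using r unfolding H_def by blast
qed

lemma nash_exists:
  fixes f g :: "'a::euclidean_space \<Rightarrow> 'b::euclidean_space \<Rightarrow> real"
  assumes A: "compact A" "convex A" "A \<noteq> {}"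
    and B: "compact B" "convex B" "B \<noteq> {}"
    and cf: "continuous_on (A \<times> B) (\<lambda>p. f (fst p) (snd p))"
    and cg: "continuous_on (A \<times> B) (\<lambda>p. g (fst p) (snd p))"
    and vf: "\<And>b. b \<in> B \<Longrightarrow> convex_on A (\<lambda>a. f a b)"
    and vg: "\<And>a. a \<in> A \<Longrightarrow> convex_on B (\<lambda>b. g a b)"
  shows "\<exists>a\<in>A. \<exists>b\<in>B. (\<forall>a'\<in>A. f a b \<le> f a' b) \<and> (\<forall>b'\<in>B. g a b \<le> g a b')"
proof -
  have cf': "continuous_on (B \<times> A) (\<lambda>p. f (snd p) (fst p))"
  proof -
    have "continuous_on (B \<times> A) ((\<lambda>p. f (fst p) (snd p)) \<circ> (\<lambda>p. (snd p, fst p)))"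
      by (rule continuous_on_compose) (auto intro!: continuous_intros continuous_on_subset[OF cf])
    then show ?thesis by (simp add: o_def)
  qed
  define e :: "nat \<Rightarrow> real" where "e m = inverse (real (Suc m))" for m
  have epos: "e m > 0" for m unfolding e_def by simp
  have fp: "\<exists>p. p \<in> A \<times> B \<and>
      (\<forall>a'\<in>A. f (fst p) (snd p) + e m * (norm (fst p))\<^sup>2 \<le> f a' (snd p) + e m * (norm a')\<^sup>2) \<and>
      (\<forall>b'\<in>B. g (fst p) (snd p) + e m * (norm (snd p))\<^sup>2 \<le> g (fst p) b' + e m * (norm b')\<^sup>2)" for m
  proof -
    obtain r where r: "\<forall>b\<in>B. r b \<in> A \<and> (\<forall>a\<in>A. f (r b) b + e m * (norm (r b))\<^sup>2 \<le> f a b + e m * (norm a)\<^sup>2)"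
      and rc: "continuous_on B r"
      using best_response[of A B "\<lambda>b a. f a b", OF A B(1) _ vf epos[of m]] cf' by auto
    obtain s where s: "\<forall>a\<in>A. s a \<in> B \<and> (\<forall>b\<in>B. g a (s a) + e m * (norm (s a))\<^sup>2 \<le> g a b + e m * (norm b)\<^sup>2)"
      and sc: "continuous_on A s"
      using best_response[of B A "\<lambda>a b. g a b", OF B A(1) _ vg epos[of m]] cg by auto
    have "continuous_on (A \<times> B) (\<lambda>p. (r (snd p), s (fst p)))"
      by (intro continuous_intros continuous_on_compose2[OF rc] continuous_on_compose2[OF sc]) auto
    moreover have "(\<lambda>p. (r (snd p), s (fst p))) \<in> A \<times> B \<rightarrow> A \<times> B" using r s by auto
    ultimately obtain p where p: "p \<in> A \<times> B" "(r (snd p), s (fst p)) = p"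
      using brouwer[of "A \<times> B" "\<lambda>p. (r (snd p), s (fst p))"] A B
      by (auto simp: compact_Times convex_Times)
    then have "fst p = r (snd p)" "snd p = s (fst p)" by auto
    then show ?thesis using p(1) r s by (metis mem_Times_iff)
  qed
  then obtain P where P: "\<And>m. P m \<in> A \<times> B"
    "\<And>m a'. a' \<in> A \<Longrightarrow> f (fst (P m)) (snd (P m)) + e m * (norm (fst (P m)))\<^sup>2 \<le> f a' (snd (P m)) + e m * (norm a')\<^sup>2"
    "\<And>m b'. b' \<in> B \<Longrightarrow> g (fst (P m)) (snd (P m)) + e m * (norm (snd (P m)))\<^sup>2 \<le> g (fst (P m)) b' + e m * (norm b')\<^sup>2"
    by metis
  have "seq_compact (A \<times> B)" using A B by (simp add: compact_Times compact_imp_seq_compact)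
  then obtain l \<sigma> where l: "l \<in> A \<times> B" and \<sigma>: "strict_mono \<sigma>" and lim: "(P \<circ> \<sigma>) \<longlonglongrightarrow> l"
    using seq_compactE[of "A \<times> B" P] P(1) by blast
  have elim: "(\<lambda>n. e (\<sigma> n)) \<longlonglongrightarrow> 0"
    using LIMSEQ_subseq_LIMSEQ[OF LIMSEQ_inverse_real_of_nat \<sigma>] by (simp add: e_def o_def)
  have lim': "(\<lambda>n. P (\<sigma> n)) \<longlonglongrightarrow> l" using lim by (simp add: o_def)
  have inAB: "\<forall>\<^sub>F n in sequentially. P (\<sigma> n) \<in> A \<times> B" using P(1) by simp
  have flim: "(\<lambda>n. f (fst (P (\<sigma> n))) (snd (P (\<sigma> n)))) \<longlonglongrightarrow> f (fst l) (snd l)"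
    using continuous_on_tendsto_compose[OF cf lim' l inAB] by simp
  have glim: "(\<lambda>n. g (fst (P (\<sigma> n))) (snd (P (\<sigma> n)))) \<longlonglongrightarrow> g (fst l) (snd l)"
    using continuous_on_tendsto_compose[OF cg lim' l inAB] by simp
  have f_ok: "f (fst l) (snd l) \<le> f a' (snd l)" if a': "a' \<in> A" for a'
  proof -
    have c2: "continuous_on (A \<times> B) (\<lambda>p. f a' (snd p))"
    proof -
      have "continuous_on (A \<times> B) ((\<lambda>p. f (fst p) (snd p)) \<circ> (\<lambda>p. (a', snd p)))"
        by (rule continuous_on_compose) (auto intro!: continuous_intros continuous_on_subset[OF cf] simp: a')
      then show ?thesis by (simp add: o_def)
    qed
    have "(\<lambda>n. f (fst (P (\<sigma> n))) (snd (P (\<sigma> n))) + e (\<sigma> n) * (norm (fst (P (\<sigma> n))))\<^sup>2)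
        \<longlonglongrightarrow> f (fst l) (snd l) + 0 * (norm (fst l))\<^sup>2"
      by (intro tendsto_intros flim elim lim')
    moreover have "(\<lambda>n. f a' (snd (P (\<sigma> n))) + e (\<sigma> n) * (norm a')\<^sup>2) \<longlonglongrightarrow> f a' (snd l) + 0 * (norm a')\<^sup>2"
      by (intro tendsto_intros elim continuous_on_tendsto_compose[OF c2 lim' l inAB, simplified])
    ultimately have "f (fst l) (snd l) + 0 * (norm (fst l))\<^sup>2 \<le> f a' (snd l) + 0 * (norm a')\<^sup>2"
      by (rule LIMSEQ_le) (use P(2)[OF a'] in auto)
    then show ?thesis by simp
  qed
  have g_ok: "g (fst l) (snd l) \<le> g (fst l) b'" if b': "b' \<in> B" for b'
  proof -
    have c2: "continuous_on (A \<times> B) (\<lambda>p. g (fst p) b')"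
    proof -
      have "continuous_on (A \<times> B) ((\<lambda>p. g (fst p) (snd p)) \<circ> (\<lambda>p. (fst p, b')))"
        by (rule continuous_on_compose) (auto intro!: continuous_intros continuous_on_subset[OF cg] simp: b')
      then show ?thesis by (simp add: o_def)
    qed
    have "(\<lambda>n. g (fst (P (\<sigma> n))) (snd (P (\<sigma> n))) + e (\<sigma> n) * (norm (snd (P (\<sigma> n))))\<^sup>2)
        \<longlonglongrightarrow> g (fst l) (snd l) + 0 * (norm (snd l))\<^sup>2"
      by (intro tendsto_intros glim elim lim')
    moreover have "(\<lambda>n. g (fst (P (\<sigma> n))) b' + e (\<sigma> n) * (norm b')\<^sup>2) \<longlonglongrightarrow> g (fst l) b' + 0 * (norm b')\<^sup>2"
      by (intro tendsto_intros elim continuous_on_tendsto_compose[OF c2 lim' l inAB, simplified])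
    ultimately have "g (fst l) (snd l) + 0 * (norm (snd l))\<^sup>2 \<le> g (fst l) b' + 0 * (norm b')\<^sup>2"
      by (rule LIMSEQ_le) (use P(3)[OF b'] in auto)
    then show ?thesis by simp
  qed
  show ?thesis using l f_ok g_ok by (intro bexI[of _ "fst l"] bexI[of _ "snd l"]) auto
qed



definition Wf :: "'k::finite lstrat \<Rightarrow> ('k option + ('n::finite) \<times> 'k \<Rightarrow> real) \<Rightarrow> 'k \<Rightarrow> real" where
  "Wf \<theta>l \<omega> j = fst (fst \<theta>l) $ j + fst (snd \<theta>l) $ j * \<omega> (Inl (Some j))"
definition Bf :: "'k::finite lstrat \<Rightarrow> ('k option + ('n::finite) \<times> 'k \<Rightarrow> real) \<Rightarrow> real" where
  "Bf \<theta>l \<omega> = snd (fst \<theta>l) + snd (snd \<theta>l) * \<omega> (Inl None)"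
definition Xf :: "('k::finite dstrat)^('n::finite) \<Rightarrow> ('k option + 'n \<times> 'k \<Rightarrow> real) \<Rightarrow> 'n \<Rightarrow> 'k \<Rightarrow> real" where
  "Xf \<theta>d \<omega> i j = fst (\<theta>d $ i) $ j + snd (\<theta>d $ i) $ j * \<omega> (Inr (i, j))"

definition Gl :: "real \<Rightarrow> ('n::finite \<Rightarrow> real) \<Rightarrow> 'k::finite lstrat \<Rightarrow> ('k dstrat)^'n \<Rightarrow> ('k option + 'n \<times> 'k \<Rightarrow> real) \<Rightarrow> real" where
  "Gl \<rho> y \<theta>l \<theta>d \<omega> = \<rho> / 2 * (\<Sum>j\<in>UNIV. (Wf \<theta>l \<omega> j)\<^sup>2)
     + (\<Sum>i\<in>UNIV. max 0 (1 - y i * ((\<Sum>j\<in>UNIV. Wf \<theta>l \<omega> j * Xf \<theta>d \<omega> i j) + Bf \<theta>l \<omega>)))"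

definition Gd :: "real \<Rightarrow> ('n::finite \<Rightarrow> real) \<Rightarrow> real^'k^'n \<Rightarrow> 'k::finite lstrat \<Rightarrow> ('k dstrat)^'n \<Rightarrow> ('k option + 'n \<times> 'k \<Rightarrow> real) \<Rightarrow> real" where
  "Gd \<rho> y xhat \<theta>l \<theta>d \<omega> = \<rho> / 2 * (\<Sum>i\<in>UNIV. \<Sum>j\<in>UNIV. (Xf \<theta>d \<omega> i j - xhat $ i $ j)\<^sup>2)
     + (\<Sum>i\<in>UNIV. max 0 (1 + y i * ((\<Sum>j\<in>UNIV. Wf \<theta>l \<omega> j * Xf \<theta>d \<omega> i j) + Bf \<theta>l \<omega>)))"

lemma norm2_vec: "(norm (v :: real^'k::finite))\<^sup>2 = (\<Sum>j\<in>UNIV. (v $ j)\<^sup>2)"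
  by (simp only: power2_norm_eq_inner inner_vec_def) (simp add: power2_eq_square)

lemma cl_eq: "c_l \<rho> y (w_of \<theta>l \<omega>) (X_of \<theta>d \<omega>) = Gl \<rho> y \<theta>l \<theta>d \<omega>"
  unfolding c_l_def Gl_def hinge_def norm2_vec
  by (simp add: w_of_def X_of_def Wf_def Bf_def Xf_def inner_vec_def)

lemma cd_eq: "c_d \<rho> y xhat (w_of \<theta>l \<omega>) (X_of \<theta>d \<omega>) = Gd \<rho> y xhat \<theta>l \<theta>d \<omega>"
  unfolding c_d_def Gd_def hinge_def norm2_vec
  by (simp add: w_of_def X_of_def Wf_def Bf_def Xf_def inner_vec_def)

lemma Gl_meas: "Gl \<rho> y \<theta>l \<theta>d \<in> borel_measurable (noise_space :: ('k::finite option + 'n::finite \<times> 'k \<Rightarrow> real) measure)"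
  unfolding Gl_def Wf_def Bf_def Xf_def by measurable

lemma Gd_meas: "Gd \<rho> y xhat \<theta>l \<theta>d \<in> borel_measurable (noise_space :: ('k::finite option + 'n::finite \<times> 'k \<Rightarrow> real) measure)"
  unfolding Gd_def Wf_def Bf_def Xf_def by measurable

lemma Gl_cont: "continuous_on UNIV (\<lambda>p. Gl \<rho> y (fst p) (snd p) \<omega>)"
  unfolding Gl_def Wf_def Bf_def Xf_def by (intro continuous_intros)

lemma Gd_cont: "continuous_on UNIV (\<lambda>p. Gd \<rho> y xhat (fst p) (snd p) \<omega>)"
  unfolding Gd_def Wf_def Bf_def Xf_def by (intro continuous_intros)

lemma Wf_lin: "lin (\<lambda>(p::'k::finite lstrat \<times> (('k dstrat)^('n::finite))) \<omega>. Wf (fst p) \<omega> j)"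
  unfolding Wf_def
  by (intro lin_add lin_param lin_mult_param lin_comp continuous_intros)

lemma Bf_lin: "lin (\<lambda>(p::'k::finite lstrat \<times> (('k dstrat)^('n::finite))) \<omega>. Bf (fst p) \<omega>)"
  unfolding Bf_def
  by (intro lin_add lin_param lin_mult_param lin_comp continuous_intros)

lemma Xf_lin: "lin (\<lambda>(p::'k::finite lstrat \<times> (('k dstrat)^('n::finite))) \<omega>. Xf (snd p) \<omega> i j)"
  unfolding Xf_def
  by (intro lin_add lin_param lin_mult_param lin_comp continuous_intros)

lemma Gl_quad: "quad (\<lambda>(p::'k::finite lstrat \<times> (('k dstrat)^('n::finite))) \<omega>. Gl \<rho> y (fst p) (snd p) \<omega>)"
  unfolding Gl_def diff_conv_add_uminus power2_eq_square
  by (intro quad_add quad_const_mult quad_sum quad_mult Wf_lin Xf_lin quad_max0 quad_const quad_neg quad_of_lin Bf_lin) auto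

lemma Gd_quad: "quad (\<lambda>(p::'k::finite lstrat \<times> (('k dstrat)^('n::finite))) \<omega>. Gd \<rho> y xhat (fst p) (snd p) \<omega>)"
  unfolding Gd_def diff_conv_add_uminus power2_eq_square
  by (intro quad_add quad_const_mult quad_sum quad_mult Wf_lin Xf_lin quad_max0 quad_const quad_neg quad_of_lin Bf_lin lin_add lin_param continuous_intros) auto



definition aff :: "('a::real_vector \<Rightarrow> real) \<Rightarrow> bool" where
  "aff L \<longleftrightarrow> (\<forall>x y u v. u + v = 1 \<longrightarrow> L (u *\<^sub>R x + v *\<^sub>R y) = u * L x + v * L y)"

lemma aff_const: "aff (\<lambda>x. c)"
  unfolding aff_def by (metis distrib_right mult_1)

lemma aff_add: "aff L \<Longrightarrow> aff K \<Longrightarrow> aff (\<lambda>x. L x + K x)"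
  unfolding aff_def by (simp add: algebra_simps)

lemma aff_diff: "aff L \<Longrightarrow> aff K \<Longrightarrow> aff (\<lambda>x. L x - K x)"
  unfolding aff_def by (simp add: algebra_simps)

lemma aff_cmul: "aff L \<Longrightarrow> aff (\<lambda>x. c * L x)"
  unfolding aff_def by (simp add: algebra_simps)

lemma aff_mult_const: "aff L \<Longrightarrow> aff (\<lambda>x. L x * c)"
  unfolding aff_def by (simp add: algebra_simps)

lemma aff_sum: "finite I \<Longrightarrow> (\<And>i. i \<in> I \<Longrightarrow> aff (L i)) \<Longrightarrow> aff (\<lambda>x. \<Sum>i\<in>I. L i x)"
proof (induction I rule: finite_induct)
  case empty then show ?case by (simp add: aff_const)
next
  case (insert a I) then show ?case by (simp add: aff_add)
qed

lemma convex_sq_aff: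
  assumes "aff L" "convex S"
  shows "convex_on S (\<lambda>x. (L x)\<^sup>2)"
  unfolding convex_on_def
proof (intro conjI assms(2) ballI allI impI)
  fix x y u v :: real
  fix a b assume uv: "0 \<le> u" "0 \<le> v" "u + v = 1"
  have eq: "L (u *\<^sub>R a + v *\<^sub>R b) = u * L a + v * L b" using assms(1) uv(3) unfolding aff_def by blast
  have "u * (L a)\<^sup>2 + v * (L b)\<^sup>2 - (u * L a + v * L b)\<^sup>2 = u * v * (L a - L b)\<^sup>2"
  proof -
    have v: "v = 1 - u" using uv(3) by simp
    show ?thesis unfolding v by (simp add: power2_eq_square algebra_simps)
  qed
  moreover have "u * v * (L a - L b)\<^sup>2 \<ge> 0" using uv by simp
  ultimately show "(L (u *\<^sub>R a + v *\<^sub>R b))\<^sup>2 \<le> u * (L a)\<^sup>2 + v * (L b)\<^sup>2" unfolding eq by linarith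
qed

lemma convex_max0_aff:
  assumes "aff L" "convex S"
  shows "convex_on S (\<lambda>x. max 0 (L x))"
  unfolding convex_on_def
proof (intro conjI assms(2) ballI allI impI)
  fix u v :: real
  fix a b assume uv: "0 \<le> u" "0 \<le> v" "u + v = 1"
  have eq: "L (u *\<^sub>R a + v *\<^sub>R b) = u * L a + v * L b" using assms(1) uv(3) unfolding aff_def by blast
  have "u * L a \<le> u * max 0 (L a)" "v * L b \<le> v * max 0 (L b)" "0 \<le> u * max 0 (L a)" "0 \<le> v * max 0 (L b)"
    using uv by (auto intro: mult_left_mono)
  then show "max 0 (L (u *\<^sub>R a + v *\<^sub>R b)) \<le> u * max 0 (L a) + v * max 0 (L b)" unfolding eq by linarith
qed

lemma convex_on_sum_fun:
  assumes "finite I" "convex S" "\<And>i. i \<in> I \<Longrightarrow> convex_on S (f i)"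
  shows "convex_on S (\<lambda>x. \<Sum>i\<in>I. f i x)"
  using assms(1,3)
proof (induction I rule: finite_induct)
  case empty then show ?case by (simp add: convex_on_const assms(2))
next
  case (insert a I) then show ?case by (simp add: convex_on_add)
qed

lemma convex_integral:
  fixes G :: "'a::real_vector \<Rightarrow> 'w \<Rightarrow> real"
  assumes "convex S" "\<And>\<omega>. convex_on S (\<lambda>x. G x \<omega>)" "\<And>x. integrable M (G x)"
  shows "convex_on S (\<lambda>x. \<integral>\<omega>. G x \<omega> \<partial>M)"
  unfolding convex_on_def
proof (intro conjI assms(1) ballI allI impI)
  fix u v :: real
  fix a b assume ab: "a \<in> S" "b \<in> S" and uv: "0 \<le> u" "0 \<le> v" "u + v = 1"
  have "(\<integral>\<omega>. G (u *\<^sub>R a + v *\<^sub>R b) \<omega> \<partial>M) \<le> (\<integral>\<omega>. u * G a \<omega> + v * G b \<omega> \<partial>M)"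
  proof (rule integral_mono)
    show "G (u *\<^sub>R a + v *\<^sub>R b) \<omega> \<le> u * G a \<omega> + v * G b \<omega>" for \<omega>
      using assms(2)[of \<omega>] ab uv unfolding convex_on_def by blast
  qed (use assms(3) in auto)
  also have "\<dots> = u * (\<integral>\<omega>. G a \<omega> \<partial>M) + v * (\<integral>\<omega>. G b \<omega> \<partial>M)"
    using assms(3) by simp
  finally show "(\<integral>\<omega>. G (u *\<^sub>R a + v *\<^sub>R b) \<omega> \<partial>M) \<le> u * (\<integral>\<omega>. G a \<omega> \<partial>M) + v * (\<integral>\<omega>. G b \<omega> \<partial>M)" .
qed

lemma Wf_aff: "aff (\<lambda>\<theta>l. Wf \<theta>l \<omega> j)"
  unfolding aff_def Wf_def by (simp add: algebra_simps)
lemma Bf_aff: "aff (\<lambda>\<theta>l. Bf \<theta>l \<omega>)"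
  unfolding aff_def Bf_def by (simp add: algebra_simps)
lemma Xf_aff: "aff (\<lambda>\<theta>d. Xf \<theta>d \<omega> i j)"
  unfolding aff_def Xf_def by (simp add: algebra_simps)

lemma Gl_convex:
  assumes "\<rho> \<ge> 0" "convex S"
  shows "convex_on S (\<lambda>\<theta>l. Gl \<rho> y \<theta>l \<theta>d \<omega>)"
  unfolding Gl_def
  by (intro convex_on_add convex_on_cmul convex_on_sum_fun convex_sq_aff convex_max0_aff
      aff_diff aff_const aff_cmul aff_add aff_sum aff_mult_const Wf_aff Bf_aff assms) (use assms in auto)

lemma Gd_convex:
  assumes "\<rho> \<ge> 0" "convex S"
  shows "convex_on S (\<lambda>\<theta>d. Gd \<rho> y xhat \<theta>l \<theta>d \<omega>)"
  unfolding Gd_def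
  by (intro convex_on_add convex_on_cmul convex_on_sum_fun convex_sq_aff convex_max0_aff
      aff_diff aff_const aff_cmul aff_add aff_sum Xf_aff assms) (use assms in auto)



lemma Theta_d_props:
  fixes \<Theta>di :: "'n::finite \<Rightarrow> ('a::euclidean_space) set"
  assumes ne: "\<And>i. \<Theta>di i \<noteq> {}" and cp: "\<And>i. compact (\<Theta>di i)" and cv: "\<And>i. convex (\<Theta>di i)"
  shows "{\<theta>d :: 'a^'n. \<forall>i. \<theta>d $ i \<in> \<Theta>di i} \<noteq> {}"
    and "compact {\<theta>d :: 'a^'n. \<forall>i. \<theta>d $ i \<in> \<Theta>di i}"
    and "convex {\<theta>d :: 'a^'n. \<forall>i. \<theta>d $ i \<in> \<Theta>di i}"
proof -
  show "{\<theta>d :: 'a^'n. \<forall>i. \<theta>d $ i \<in> \<Theta>di i} \<noteq> {}"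
  proof -
    have "(\<chi> i. SOME t. t \<in> \<Theta>di i) \<in> {\<theta>d :: 'a^'n. \<forall>i. \<theta>d $ i \<in> \<Theta>di i}"
      using ne by (simp add: some_in_eq)
    then show ?thesis by blast
  qed
  show "convex {\<theta>d :: 'a^'n. \<forall>i. \<theta>d $ i \<in> \<Theta>di i}"
    unfolding convex_def using cv by (auto intro: convexD)
  have eq: "{\<theta>d :: 'a^'n. \<forall>i. \<theta>d $ i \<in> \<Theta>di i} = (\<Inter>i. (\<lambda>x. x $ i) -` \<Theta>di i)" by auto
  have cl: "closed {\<theta>d :: 'a^'n. \<forall>i. \<theta>d $ i \<in> \<Theta>di i}"
    unfolding eq by (intro closed_INT ballI closed_vimage_vec_nth compact_imp_closed cp)
  have "\<forall>i. \<exists>B. \<forall>t\<in>\<Theta>di i. norm t \<le> B"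
    using cp compact_imp_bounded bounded_iff by metis
  then obtain B where B: "\<And>i t. t \<in> \<Theta>di i \<Longrightarrow> norm t \<le> B i" by metis
  have "norm \<theta>d \<le> (\<Sum>i\<in>UNIV. B i)" if "\<theta>d \<in> {\<theta>d :: 'a^'n. \<forall>i. \<theta>d $ i \<in> \<Theta>di i}" for \<theta>d
  proof -
    have "norm \<theta>d \<le> (\<Sum>i\<in>UNIV. norm (\<theta>d $ i))"
      unfolding norm_vec_def by (rule L2_set_le_sum) simp
    also have "\<dots> \<le> (\<Sum>i\<in>UNIV. B i)" using that B by (intro sum_mono) auto
    finally show ?thesis .
  qed
  then have "bounded {\<theta>d :: 'a^'n. \<forall>i. \<theta>d $ i \<in> \<Theta>di i}" unfolding bounded_iff by blast
  then show "compact {\<theta>d :: 'a^'n. \<forall>i. \<theta>d $ i \<in> \<Theta>di i}" using cl by (simp add: compact_eq_bounded_closed)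
qed

lemma cbar_l_eq: "cbar_l \<rho> y \<theta>l \<theta>d = (\<integral>\<omega>. Gl \<rho> y \<theta>l \<theta>d \<omega> \<partial>(noise_space :: ('k::finite option + 'n::finite \<times> 'k \<Rightarrow> real) measure))"
  unfolding cbar_l_def cl_eq ..

lemma cbar_d_eq: "cbar_d \<rho> y xhat \<theta>l \<theta>d = (\<integral>\<omega>. Gd \<rho> y xhat \<theta>l \<theta>d \<omega> \<partial>(noise_space :: ('k::finite option + 'n::finite \<times> 'k \<Rightarrow> real) measure))"
  unfolding cbar_d_def cd_eq ..

lemma Gl_integrable: "integrable (noise_space :: ('k::finite option + 'n::finite \<times> 'k \<Rightarrow> real) measure) (Gl \<rho> y (\<theta>l :: 'k lstrat) (\<theta>d :: ('k dstrat)^'n))"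
proof -
  have "integrable (noise_space :: ('k::finite option + 'n::finite \<times> 'k \<Rightarrow> real) measure) ((\<lambda>p. Gl \<rho> y (fst p) (snd p)) (\<theta>l, \<theta>d))"
    by (rule integrable_of_bound[OF Gl_meas quad_integrable_bound[OF Gl_quad]])
  then show ?thesis by simp
qed

lemma Gd_integrable: "integrable (noise_space :: ('k::finite option + 'n::finite \<times> 'k \<Rightarrow> real) measure) (Gd \<rho> y xhat (\<theta>l :: 'k lstrat) (\<theta>d :: ('k dstrat)^'n))"
proof -
  have "integrable (noise_space :: ('k::finite option + 'n::finite \<times> 'k \<Rightarrow> real) measure) ((\<lambda>p. Gd \<rho> y xhat (fst p) (snd p)) (\<theta>l, \<theta>d))"
    by (rule integrable_of_bound[OF Gd_meas quad_integrable_bound[OF Gd_quad]])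
  then show ?thesis by simp
qed

lemma cbar_l_cont: "continuous_on S (\<lambda>p. cbar_l \<rho> y (fst p :: 'k::finite lstrat) (snd p :: ('k dstrat)^('n::finite)))"
  unfolding cbar_l_eq
  by (rule cont_integral[OF Gl_meas Gl_cont quad_integrable_bound[OF Gl_quad]])

lemma cbar_d_cont: "continuous_on S (\<lambda>p. cbar_d \<rho> y xhat (fst p :: 'k::finite lstrat) (snd p :: ('k dstrat)^('n::finite)))"
  unfolding cbar_d_eq
  by (rule cont_integral[OF Gd_meas Gd_cont quad_integrable_bound[OF Gd_quad]])

theorem mainTheorem4:
  fixes xhat :: "real^'k::finite^'n::finite"
    and y :: "'n \<Rightarrow> real"
    and \<rho>l \<rho>d :: real
    and \<Theta>l :: "'k lstrat set"
    and \<Theta>di :: "'n \<Rightarrow> 'k dstrat set"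
    and \<Theta>d :: "(('k dstrat)^'n) set"
  assumes y: "\<And>i. y i \<in> {-1, 1}"
    and \<rho>: "\<rho>l > 0" "\<rho>d > 0"
    and \<Theta>l: "\<Theta>l \<noteq> {}" "compact \<Theta>l" "convex \<Theta>l"
    and \<Theta>l_nonneg: "\<And>\<theta>. \<theta> \<in> \<Theta>l \<Longrightarrow> (\<forall>j. fst (snd \<theta>) $ j \<ge> 0) \<and> snd (snd \<theta>) \<ge> 0"
    and \<Theta>di: "\<And>i. \<Theta>di i \<noteq> {}" "\<And>i. compact (\<Theta>di i)" "\<And>i. convex (\<Theta>di i)"
    and \<Theta>di_nonneg: "\<And>i \<theta>. \<theta> \<in> \<Theta>di i \<Longrightarrow> (\<forall>j. snd \<theta> $ j \<ge> 0)"
    and \<Theta>d: "\<Theta>d = {\<theta>d. \<forall>i. \<theta>d $ i \<in> \<Theta>di i}"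
  shows "(\<forall>\<theta>d\<in>\<Theta>d. convex_on \<Theta>l (\<lambda>\<theta>l. cbar_l \<rho>l y \<theta>l \<theta>d))
       \<and> (\<forall>\<theta>l\<in>\<Theta>l. convex_on \<Theta>d (\<lambda>\<theta>d. cbar_d \<rho>d y xhat \<theta>l \<theta>d))
       \<and> (\<exists>\<theta>ls\<in>\<Theta>l. \<exists>\<theta>ds\<in>\<Theta>d.
            (\<forall>\<theta>l\<in>\<Theta>l. cbar_l \<rho>l y \<theta>ls \<theta>ds \<le> cbar_l \<rho>l y \<theta>l \<theta>ds)
          \<and> (\<forall>\<theta>d\<in>\<Theta>d. cbar_d \<rho>d y xhat \<theta>ls \<theta>ds \<le> cbar_d \<rho>d y xhat \<theta>ls \<theta>d))"
proof -
  have D: "\<Theta>d \<noteq> {}" "compact \<Theta>d" "convex \<Theta>d"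
    unfolding \<Theta>d using Theta_d_props[OF \<Theta>di] by auto
  have cvl: "convex_on \<Theta>l (\<lambda>\<theta>l. cbar_l \<rho>l y \<theta>l \<theta>d)" for \<theta>d
    unfolding cbar_l_eq
    by (rule convex_integral[OF \<Theta>l(3) Gl_convex Gl_integrable]) (use \<rho> \<Theta>l in auto)
  have cvd: "convex_on \<Theta>d (\<lambda>\<theta>d. cbar_d \<rho>d y xhat \<theta>l \<theta>d)" for \<theta>l
    unfolding cbar_d_eq
    by (rule convex_integral[OF D(3) Gd_convex Gd_integrable]) (use \<rho> D in auto)
  have "\<exists>a\<in>\<Theta>l. \<exists>b\<in>\<Theta>d. (\<forall>a'\<in>\<Theta>l. cbar_l \<rho>l y a b \<le> cbar_l \<rho>l y a' b) \<and> (\<forall>b'\<in>\<Theta>d. cbar_d \<rho>d y xhat a b \<le> cbar_d \<rho>d y xhat a b')"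
    by (rule nash_exists[OF \<Theta>l(2,3,1) D(2,3,1) cbar_l_cont cbar_d_cont cvl cvd])
  then show ?thesis using cvl cvd by blast
qed

end
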